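(* Let $\vartheta$ be a primitive semi-compatible random substitution with topological entropy $s$, and suppose $\mathcal P(q)\neq\varnothing$ for at least one $q\in\mathbb N$. Then \[ s=\limsup_{q\to\infty}\frac1q\log(\#\mathcal P(q)). \]
   Context: Let $\mathcal A=\{a_1,\dots,a_n\}$ be a finite alphabet. A random substitution is a map $\vartheta$ from $\mathcal A$ to finite non-empty sets of finite non-empty words, extended to words by $\vartheta(u_1\cdots u_m)=\{w_1\cdots w_m: w_k\in\vartheta(u_k)\}$ and to sets of words by unions; powers $\vartheta^m$ are compositions. $\vartheta$ is semi-compatible if for each $a$ all words in $\vartheta(a)$ have the same vector of letter counts; the substitution matrix $M_{ij}$ is the number of $a_i$ in any word of $\vartheta(a_j)$; primitive means $M$ is a primitive matrix. The language $\mathcal L$ is the set of all subwords (contiguous factors) of words in $\vartheta^m(a)$, $a\in\mathcal A$, $m\in\mathbb N$; $\mathcal L_\ell$ its words of length $\ell$; $s=\lim_{\ell\to\infty}\frac1\ell\log\#\mathcal L_\ell$. The set of periodic words of period $q$ is $\mathcal P(q)=\{u\in\mathcal L: |u|=q,\ u^N\in\mathcal L\text{ for all }N\in\mathbb N\}$, where $u^N$ is the $N$-fold concatenation of $u$. *)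

theory Defs
  imports "HOL-Analysis.Analysis" "HOL-Library.Sublist"
begin

definition random_subst :: "('a::finite \<Rightarrow> 'a list set) \<Rightarrow> bool" where
  "random_subst \<theta> \<longleftrightarrow> (\<forall>a. finite (\<theta> a) \<and> \<theta> a \<noteq> {} \<and> (\<forall>w\<in>\<theta> a. w \<noteq> []))"

definition subst_word :: "('a \<Rightarrow> 'a list set) \<Rightarrow> 'a list \<Rightarrow> 'a list set" where
  "subst_word \<theta> u = {concat ws | ws. length ws = length u \<and> (\<forall>i<length u. ws ! i \<in> \<theta> (u ! i))}"

definition subst_set :: "('a \<Rightarrow> 'a list set) \<Rightarrow> 'a list set \<Rightarrow> 'a list set" where
  "subst_set \<theta> W = (\<Union>w\<in>W. subst_word \<theta> w)"

definition subst_pow :: "('a \<Rightarrow> 'a list set) \<Rightarrow> nat \<Rightarrow> 'a \<Rightarrow> 'a list set" where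
  "subst_pow \<theta> m a = (subst_set \<theta> ^^ m) {[a]}"

definition semi_compatible :: "('a \<Rightarrow> 'a list set) \<Rightarrow> bool" where
  "semi_compatible \<theta> \<longleftrightarrow>
     (\<forall>a. \<forall>v\<in>\<theta> a. \<forall>w\<in>\<theta> a. \<forall>b. count_list v b = count_list w b)"

text \<open>Substitution matrix: M b a = number of b's in (any) word of \<theta>(a).\<close>
definition subst_matrix :: "('a \<Rightarrow> 'a list set) \<Rightarrow> 'a \<Rightarrow> 'a \<Rightarrow> nat" where
  "subst_matrix \<theta> b a = count_list (SOME w. w \<in> \<theta> a) b"

fun mat_pow :: "('a::finite \<Rightarrow> 'a \<Rightarrow> nat) \<Rightarrow> nat \<Rightarrow> 'a \<Rightarrow> 'a \<Rightarrow> nat" where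
  "mat_pow M 0 = (\<lambda>i j. if i = j then 1 else 0)"
| "mat_pow M (Suc k) = (\<lambda>i j. \<Sum>l\<in>UNIV. M i l * mat_pow M k l j)"

definition primitive_matrix :: "('a::finite \<Rightarrow> 'a \<Rightarrow> nat) \<Rightarrow> bool" where
  "primitive_matrix M \<longleftrightarrow> (\<exists>k>0. \<forall>i j. mat_pow M k i j > 0)"

definition primitive_subst :: "('a::finite \<Rightarrow> 'a list set) \<Rightarrow> bool" where
  "primitive_subst \<theta> \<longleftrightarrow> primitive_matrix (subst_matrix \<theta>)"

definition lang :: "('a \<Rightarrow> 'a list set) \<Rightarrow> 'a list set" where
  "lang \<theta> = {u. \<exists>a m w. w \<in> subst_pow \<theta> m a \<and> sublist u w}"

definition lang_len :: "('a \<Rightarrow> 'a list set) \<Rightarrow> nat \<Rightarrow> 'a list set" where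
  "lang_len \<theta> l = {u \<in> lang \<theta>. length u = l}"

definition rs_entropy :: "('a \<Rightarrow> 'a list set) \<Rightarrow> real" where
  "rs_entropy \<theta> = lim (\<lambda>l. ln (real (card (lang_len \<theta> l))) / real l)"

definition word_pow :: "'a list \<Rightarrow> nat \<Rightarrow> 'a list" where
  "word_pow u N = concat (replicate N u)"

definition periodic_words :: "('a \<Rightarrow> 'a list set) \<Rightarrow> nat \<Rightarrow> 'a list set" where
  "periodic_words \<theta> q = {u \<in> lang \<theta>. length u = q \<and> (\<forall>N. word_pow u N \<in> lang \<theta>)}"

definition per_growth :: "('a \<Rightarrow> 'a list set) \<Rightarrow> nat \<Rightarrow> ereal" where
  "per_growth \<theta> q = (if periodic_words \<theta> q = {} then -\<infinity>
      else ereal (ln (real (card (periodic_words \<theta> q))) / real q))"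

end

theory Submission imports Defs begin

definition conc :: "'b list set \<Rightarrow> 'b list set \<Rightarrow> 'b list set" where
  "conc X Y = {x @ y | x y. x \<in> X \<and> y \<in> Y}"

lemma subst_word_Nil: "subst_word \<theta> [] = {[]}"
  by (auto simp: subst_word_def)

lemma subst_word_Cons: "subst_word \<theta> (c # u) = conc (\<theta> c) (subst_word \<theta> u)"
proof (rule set_eqI, rule iffI)
  fix z assume "z \<in> subst_word \<theta> (c # u)"
  then obtain ws where ws: "z = concat ws" "length ws = Suc (length u)"
    "\<forall>i<Suc (length u). ws ! i \<in> \<theta> ((c#u) ! i)" by (auto simp: subst_word_def)
  then obtain x ws' where x: "ws = x # ws'" by (cases ws) auto
  have "x \<in> \<theta> c" using ws(3) x by force
  moreover have "concat ws' \<in> subst_word \<theta> u"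
    unfolding subst_word_def using ws x by force
  ultimately show "z \<in> conc (\<theta> c) (subst_word \<theta> u)"
    unfolding conc_def using ws(1) x by auto
next
  fix z assume "z \<in> conc (\<theta> c) (subst_word \<theta> u)"
  then obtain x ws where z: "z = x @ concat ws" "x \<in> \<theta> c" "length ws = length u"
     "\<forall>i<length u. ws ! i \<in> \<theta> (u ! i)" by (auto simp: conc_def subst_word_def)
  have "\<forall>i<Suc (length u). (x#ws) ! i \<in> \<theta> ((c#u) ! i)"
    using z by (auto simp: nth_Cons split: nat.splits)
  then show "z \<in> subst_word \<theta> (c # u)" unfolding subst_word_def using z
    by (auto intro!: exI[of _ "x#ws"])
qed

lemma conc_assoc: "conc (conc X Y) Z = conc X (conc Y Z)"
proof (rule set_eqI, rule iffI)
  fix w assume "w \<in> conc (conc X Y) Z"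
  then obtain x y z where "x \<in> X" "y \<in> Y" "z \<in> Z" "w = x @ y @ z"
    unfolding conc_def by auto
  then show "w \<in> conc X (conc Y Z)" unfolding conc_def by blast
next
  fix w assume "w \<in> conc X (conc Y Z)"
  then obtain x y z where "x \<in> X" "y \<in> Y" "z \<in> Z" "w = (x @ y) @ z"
    unfolding conc_def by auto
  then show "w \<in> conc (conc X Y) Z" unfolding conc_def by blast
qed

lemma conc_Nil1[simp]: "conc {[]} X = X" and conc_Nil2[simp]: "conc X {[]} = X"
  unfolding conc_def by auto

lemma subst_word_append: "subst_word \<theta> (u @ v) = conc (subst_word \<theta> u) (subst_word \<theta> v)"
  by (induction u) (auto simp: subst_word_Nil subst_word_Cons conc_assoc)

lemma subst_set_UN: "subst_set \<theta> (\<Union>i\<in>I. X i) = (\<Union>i\<in>I. subst_set \<theta> (X i))"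
  unfolding subst_set_def by auto

lemma conc_iff: "z \<in> conc X Y \<longleftrightarrow> (\<exists>x y. z = x @ y \<and> x \<in> X \<and> y \<in> Y)"
  unfolding conc_def by blast

lemma concI: "x \<in> X \<Longrightarrow> y \<in> Y \<Longrightarrow> x @ y \<in> conc X Y"
  unfolding conc_def by blast

lemma subst_set_iff: "z \<in> subst_set \<theta> W \<longleftrightarrow> (\<exists>w\<in>W. z \<in> subst_word \<theta> w)"
  unfolding subst_set_def by blast

lemma subst_set_conc: "subst_set \<theta> (conc X Y) = conc (subst_set \<theta> X) (subst_set \<theta> Y)"
proof (rule set_eqI, rule iffI)
  fix z assume "z \<in> subst_set \<theta> (conc X Y)"
  then obtain w where w: "w \<in> conc X Y" "z \<in> subst_word \<theta> w" unfolding subst_set_iff by blast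
  then obtain x y where xy: "x \<in> X" "y \<in> Y" "w = x @ y" unfolding conc_iff by blast
  have "z \<in> conc (subst_word \<theta> x) (subst_word \<theta> y)" using w(2) unfolding xy(3) subst_word_append .
  then obtain a b where ab: "a \<in> subst_word \<theta> x" "b \<in> subst_word \<theta> y" "z = a @ b"
    unfolding conc_iff by blast
  have "a \<in> subst_set \<theta> X" using ab(1) xy(1) unfolding subst_set_iff by blast
  moreover have "b \<in> subst_set \<theta> Y" using ab(2) xy(2) unfolding subst_set_iff by blast
  ultimately show "z \<in> conc (subst_set \<theta> X) (subst_set \<theta> Y)"
    unfolding ab(3) by (rule concI)
next
  fix z assume "z \<in> conc (subst_set \<theta> X) (subst_set \<theta> Y)"
  then obtain a b where ab: "a \<in> subst_set \<theta> X" "b \<in> subst_set \<theta> Y" "z = a @ b"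
    unfolding conc_iff by blast
  obtain x where x: "x \<in> X" "a \<in> subst_word \<theta> x" using ab(1) unfolding subst_set_iff by blast
  obtain y where y: "y \<in> Y" "b \<in> subst_word \<theta> y" using ab(2) unfolding subst_set_iff by blast
  have "z \<in> subst_word \<theta> (x @ y)" unfolding subst_word_append ab(3) using x(2) y(2) by (rule concI)
  moreover have "x @ y \<in> conc X Y" using x(1) y(1) by (rule concI)
  ultimately show "z \<in> subst_set \<theta> (conc X Y)" unfolding subst_set_iff by blast
qed

definition SS :: "('a \<Rightarrow> 'a list set) \<Rightarrow> nat \<Rightarrow> 'a list \<Rightarrow> 'a list set" where
  "SS \<theta> m w = (subst_set \<theta> ^^ m) {w}"

lemma funpow_subst_set: "(subst_set \<theta> ^^ m) W = (\<Union>w\<in>W. SS \<theta> m w)"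
proof (induction m arbitrary: W)
  case 0 then show ?case by (auto simp: SS_def)
next
  case (Suc m)
  have "(subst_set \<theta> ^^ Suc m) W = subst_set \<theta> ((subst_set \<theta> ^^ m) W)" by simp
  also have "\<dots> = (\<Union>w\<in>W. subst_set \<theta> (SS \<theta> m w))" by (simp add: Suc subst_set_UN)
  also have "\<dots> = (\<Union>w\<in>W. SS \<theta> (Suc m) w)" by (simp add: SS_def)
  finally show ?case .
qed

lemma SS_0[simp]: "SS \<theta> 0 w = {w}" by (simp add: SS_def)

lemma SS_Suc: "SS \<theta> (Suc m) w = (\<Union>y\<in>SS \<theta> m w. subst_word \<theta> y)"
  by (simp add: SS_def subst_set_def)

lemma SS_add: "SS \<theta> (m + k) w = (\<Union>y\<in>SS \<theta> k w. SS \<theta> m y)"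
proof -
  have "SS \<theta> (m + k) w = (subst_set \<theta> ^^ m) (SS \<theta> k w)"
    by (simp add: SS_def funpow_add)
  then show ?thesis by (simp only: funpow_subst_set)
qed

lemma SS_Nil[simp]: "SS \<theta> m [] = {[]}"
  by (induction m) (auto simp: SS_Suc subst_word_Nil)

lemma SS_append: "SS \<theta> m (u @ v) = conc (SS \<theta> m u) (SS \<theta> m v)"
proof (induction m)
  case 0 then show ?case by (simp add: conc_def)
next
  case (Suc m)
  have "SS \<theta> (Suc m) (u @ v) = subst_set \<theta> (SS \<theta> m (u @ v))" by (simp add: SS_def)
  also have "\<dots> = conc (subst_set \<theta> (SS \<theta> m u)) (subst_set \<theta> (SS \<theta> m v))"
    by (simp add: Suc subst_set_conc)
  finally show ?case by (simp add: SS_def)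
qed

lemma SS_Cons: "SS \<theta> m (c # v) = conc (SS \<theta> m [c]) (SS \<theta> m v)"
  using SS_append[of \<theta> m "[c]" v] by simp

lemma SS_single: "SS \<theta> m [c] = subst_pow \<theta> m c"
  by (simp add: SS_def subst_pow_def)

lemma SS_one: "SS \<theta> 1 w = subst_word \<theta> w"
  by (simp add: SS_Suc)


lemma conc_image: "conc X Y = (\<lambda>(x,y). x @ y) ` (X \<times> Y)" unfolding conc_def by auto

lemma finite_conc: "finite X \<Longrightarrow> finite Y \<Longrightarrow> finite (conc X Y)"
  unfolding conc_image by auto

lemma conc_ne: "X \<noteq> {} \<Longrightarrow> Y \<noteq> {} \<Longrightarrow> conc X Y \<noteq> {}"
  unfolding conc_def by auto

lemma card_conc:
  assumes "\<forall>x\<in>X. length x = l" "finite X" "finite Y"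
  shows "card (conc X Y) = card X * card Y"
proof -
  have "inj_on (\<lambda>(x,y). x @ y) (X \<times> Y)"
    using assms(1) by (auto simp: inj_on_def append_eq_append_conv)
  then show ?thesis unfolding conc_image by (simp add: card_image card_cartesian_product)
qed

lemma fekete_aux:
  fixes a :: "nat \<Rightarrow> real"
  assumes sub: "\<And>m n. a (m + n) \<le> a m + a n"
  shows "a (q * k + r) \<le> real q * a k + a r"
proof (induction q)
  case 0 then show ?case by simp
next
  case (Suc q)
  have "a (Suc q * k + r) = a (k + (q * k + r))" by (simp add: add.assoc)
  also have "\<dots> \<le> a k + a (q * k + r)" by (rule sub)
  finally show ?case using Suc by (simp add: algebra_simps)
qed

lemma fekete:
  fixes a :: "nat \<Rightarrow> real"
  assumes sub: "\<And>m n. a (m + n) \<le> a m + a n" and nn: "\<And>n. a n \<ge> 0"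
  shows "(\<lambda>n. a n / real n) \<longlonglongrightarrow> Inf ((\<lambda>n. a n / real n) ` {1..})"
    and "\<And>n. n \<ge> 1 \<Longrightarrow> Inf ((\<lambda>n. a n / real n) ` {1..}) \<le> a n / real n"
proof -
  let ?f = "\<lambda>n. a n / real n"
  define s where "s = Inf (?f ` {1..})"
  have bdd: "bdd_below (?f ` {1..})" by (rule bdd_belowI[of _ 0]) (auto simp: nn)
  have low: "s \<le> ?f n" if "n \<ge> 1" for n
    unfolding s_def using bdd that by (intro cInf_lower) auto
  then show "\<And>n. n \<ge> 1 \<Longrightarrow> Inf ((\<lambda>n. a n / real n) ` {1..}) \<le> a n / real n"
    by (simp add: s_def)
  show "?f \<longlonglongrightarrow> Inf (?f ` {1..})" unfolding s_def[symmetric]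
  proof (rule LIMSEQ_I)
    fix r :: real assume r: "r > 0"
    have "Inf (?f ` {1..}) < s + r / 2" using r by (simp add: s_def)
    then obtain k where k: "k \<ge> 1" "?f k < s + r / 2"
      using cInf_lessD[of "?f ` {1..}"] by fastforce
    define C where "C = Max (a ` {..<k})"
    have C: "a j \<le> C" if "j < k" for j unfolding C_def using that by (intro Max_ge) auto
    have C0: "C \<ge> 0" using C[of 0] nn[of 0] k by linarith
    define N where "N = nat \<lceil>2 * C / r\<rceil> + 1"
    have "\<forall>n\<ge>N. norm (?f n - s) < r"
    proof (intro allI impI)
      fix n assume n: "n \<ge> N"
      then have n1: "n \<ge> 1" by (simp add: N_def)
      have npos: "real n > 0" using n1 by simp
      define q where "q = n div k"
      define t where "t = n mod k"
      have ndec: "n = q * k + t" by (simp add: q_def t_def)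
      have tk: "t < k" using k by (simp add: t_def)
      have "a n \<le> real q * a k + a t" using fekete_aux[OF sub, of q k t] ndec by simp
      also have "\<dots> \<le> real q * a k + C" using C[OF tk] by simp
      finally have an: "a n \<le> real q * a k + C" .
      have qk: "real q * real k \<le> real n" using ndec by (metis le_add1 of_nat_le_iff of_nat_mult)
      have "real q * a k = (real q * real k) * ?f k" using k by (simp add: field_simps)
      also have "\<dots> \<le> real n * ?f k" using qk nn[of k] k by (intro mult_right_mono) auto
      finally have "?f n \<le> (real n * ?f k + C) / real n" using an npos by (simp add: divide_right_mono)
      also have "\<dots> = ?f k + C / real n" using npos by (simp add: field_simps)
      also have "C / real n < r / 2"
      proof -
        have "2 * C / r < real n" using n unfolding N_def by linarith
        then show ?thesis using r npos by (simp add: field_simps)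
      qed
      finally have "?f n < s + r" using k by linarith
      moreover have "s \<le> ?f n" using low n1 by simp
      ultimately show "norm (?f n - s) < r" by simp
    qed
    then show "\<exists>N. \<forall>n\<ge>N. norm (?f n - s) < r" by blast
  qed
qed

definition Kof :: "('a::finite \<Rightarrow> 'a list set) \<Rightarrow> nat" where
  "Kof \<theta> = (SOME k. k > 0 \<and> (\<forall>i j. mat_pow (subst_matrix \<theta>) k i j > 0))"

definition lenof :: "('a::finite \<Rightarrow> 'a list set) \<Rightarrow> nat \<Rightarrow> 'a \<Rightarrow> nat" where
  "lenof \<theta> m a = (\<Sum>b\<in>UNIV. mat_pow (subst_matrix \<theta>) m b a)"

definition Lmaxof :: "('a::finite \<Rightarrow> 'a list set) \<Rightarrow> nat \<Rightarrow> nat" where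
  "Lmaxof \<theta> m = Max (range (lenof \<theta> m))"
definition Lminof :: "('a::finite \<Rightarrow> 'a list set) \<Rightarrow> nat \<Rightarrow> nat" where
  "Lminof \<theta> m = Min (range (lenof \<theta> m))"

definition gof :: "('a::finite \<Rightarrow> 'a list set) \<Rightarrow> nat \<Rightarrow> 'a \<Rightarrow> real" where
  "gof \<theta> m a = ln (real (card (SS \<theta> m [a])))"
definition ratof :: "('a::finite \<Rightarrow> 'a list set) \<Rightarrow> nat \<Rightarrow> 'a \<Rightarrow> real" where
  "ratof \<theta> m a = gof \<theta> m a / real (lenof \<theta> m a)"
definition rhoof :: "('a::finite \<Rightarrow> 'a list set) \<Rightarrow> nat \<Rightarrow> real" where
  "rhoof \<theta> m = Max (range (ratof \<theta> m))"
definition sigof :: "('a::finite \<Rightarrow> 'a list set) \<Rightarrow> nat \<Rightarrow> real" where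
  "sigof \<theta> m = Min (range (ratof \<theta> m))"

lemma sum_list_le_bound: "(\<forall>x\<in>set xs. f x \<le> (B::'b::linordered_semidom)) \<Longrightarrow> sum_list (map f xs) \<le> of_nat (length xs) * B"
  by (induction xs) (auto simp: algebra_simps add_mono)

lemma sum_list_ge_bound: "(\<forall>x\<in>set xs. (B::'b::linordered_semidom) \<le> f x) \<Longrightarrow> of_nat (length xs) * B \<le> sum_list (map f xs)"
  by (induction xs) (auto simp: algebra_simps add_mono)

lemma elem_le_sum_list_nonneg: "x \<in> set xs \<Longrightarrow> \<forall>y\<in>set xs. 0 \<le> f y \<Longrightarrow> f x \<le> sum_list (map (f::_\<Rightarrow>real) xs)"
proof (induction xs)
  case Nil then show ?case by simp
next
  case (Cons a xs)
  show ?case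
  proof (cases "x = a")
    case True
    have "0 \<le> sum_list (map f xs)" using Cons.prems(2) by (intro sum_list_nonneg) auto
    then show ?thesis using True by (simp add: add_increasing2)
  next
    case False
    then have "f x \<le> sum_list (map f xs)" using Cons by auto
    moreover have "0 \<le> f a" using Cons.prems(2) by auto
    ultimately show ?thesis by (simp add: add_increasing)
  qed
qed

definition entof :: "('a::finite \<Rightarrow> 'a list set) \<Rightarrow> real" where
  "entof \<theta> = Inf ((\<lambda>n. ln (real (card (lang_len \<theta> n))) / real n) ` {1..})"

locale rs =
  fixes \<theta> :: "'a::finite \<Rightarrow> 'a list set"
  assumes rsub: "random_subst \<theta>" and semi: "semi_compatible \<theta>" and prim: "primitive_subst \<theta>"
begin

abbreviation S where "S \<equiv> SS \<theta>"
abbreviation M where "M \<equiv> subst_matrix \<theta>"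

lemma theta_fin: "finite (\<theta> a)" and theta_ne: "\<theta> a \<noteq> {}" and theta_nonnil: "w \<in> \<theta> a \<Longrightarrow> w \<noteq> []"
  using rsub by (auto simp: random_subst_def)

lemma subst_word_fin_ne: "finite (subst_word \<theta> y) \<and> subst_word \<theta> y \<noteq> {}"
  by (induction y) (auto simp: subst_word_Nil subst_word_Cons theta_fin theta_ne finite_conc conc_ne)

lemma S_fin_ne: "finite (S m w) \<and> S m w \<noteq> {}"
proof (induction m arbitrary: w)
  case 0 then show ?case by simp
next
  case (Suc m) then show ?case using subst_word_fin_ne by (auto simp: SS_Suc)
qed

lemma S_fin: "finite (S m w)" and S_ne: "S m w \<noteq> {}" using S_fin_ne by auto

lemma subst_word_length: "z \<in> subst_word \<theta> y \<Longrightarrow> length y \<le> length z"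
proof (induction y arbitrary: z)
  case Nil then show ?case by simp
next
  case (Cons c y)
  then obtain x z' where "x \<in> \<theta> c" "z' \<in> subst_word \<theta> y" "z = x @ z'"
    by (auto simp: subst_word_Cons conc_iff)
  with Cons.IH[of z'] theta_nonnil[of x c] show ?case by (cases x) auto
qed

lemma S_length_ge: "z \<in> S m w \<Longrightarrow> length w \<le> length z"
proof (induction m arbitrary: z)
  case 0 then show ?case by simp
next
  case (Suc m) then show ?case using subst_word_length by (fastforce simp: SS_Suc)
qed

lemma count_theta: "x \<in> \<theta> c \<Longrightarrow> count_list x b = M b c"
proof -
  assume x: "x \<in> \<theta> c"
  have "(SOME w. w \<in> \<theta> c) \<in> \<theta> c" using x by (rule someI)
  then show ?thesis using semi x unfolding semi_compatible_def subst_matrix_def by blast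
qed

lemma count_subst_word: "z \<in> subst_word \<theta> y \<Longrightarrow> count_list z b = (\<Sum>l\<in>UNIV. count_list y l * M b l)"
proof (induction y arbitrary: z)
  case Nil then show ?case by (simp add: subst_word_Nil)
next
  case (Cons c y)
  then obtain x z' where xz: "x \<in> \<theta> c" "z' \<in> subst_word \<theta> y" "z = x @ z'"
    by (auto simp: subst_word_Cons conc_iff)
  have "count_list z b = M b c + (\<Sum>l\<in>UNIV. count_list y l * M b l)"
    using xz Cons.IH[of z'] count_theta[of x c b] by simp
  also have "\<dots> = (\<Sum>l\<in>UNIV. (if c = l then 1 else 0) * M b l) + (\<Sum>l\<in>UNIV. count_list y l * M b l)"
  proof -
    have "(\<Sum>l\<in>UNIV. (if c = l then 1 else 0) * M b l) = (\<Sum>l\<in>UNIV. if c = l then M b l else 0)"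
      by (rule sum.cong) auto
    then show ?thesis by simp
  qed
  also have "\<dots> = (\<Sum>l\<in>UNIV. count_list (c # y) l * M b l)"
    by (simp add: sum.distrib[symmetric]) (rule sum.cong, auto simp: algebra_simps)
  finally show ?case .
qed

lemma count_S: "z \<in> S m [a] \<Longrightarrow> count_list z b = mat_pow M m b a"
proof (induction m arbitrary: z b)
  case 0 then show ?case by simp
next
  case (Suc m)
  then obtain y where y: "y \<in> S m [a]" "z \<in> subst_word \<theta> y" by (auto simp: SS_Suc)
  have "count_list z b = (\<Sum>l\<in>UNIV. count_list y l * M b l)" using count_subst_word[OF y(2)] .
  also have "\<dots> = (\<Sum>l\<in>UNIV. M b l * mat_pow M m l a)"
    using Suc.IH[OF y(1)] by (simp add: mult.commute)
  finally show ?case by simp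
qed

definition len :: "nat \<Rightarrow> 'a \<Rightarrow> nat" where "len m a = lenof \<theta> m a"

lemma length_S1: "z \<in> S m [a] \<Longrightarrow> length z = len m a"
  using sum_count_set[of z UNIV] count_S[of z m a] by (simp add: len_def lenof_def)

lemma length_S: "z \<in> S m w \<Longrightarrow> length z = sum_list (map (len m) w)"
proof (induction w arbitrary: z)
  case Nil then show ?case by simp
next
  case (Cons c w)
  then obtain x z' where "x \<in> S m [c]" "z' \<in> S m w" "z = x @ z'"
    by (auto simp: SS_Cons[of _ _ c w] conc_iff)
  with Cons.IH[of z'] length_S1[of x m c] show ?case by simp
qed

lemma len_ge1: "len m a \<ge> 1"
proof -
  obtain z where "z \<in> S m [a]" using S_ne by blast
  then show ?thesis using S_length_ge[of z m "[a]"] length_S1[of z m a] by simp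
qed

definition Nm :: "nat \<Rightarrow> 'a \<Rightarrow> nat" where "Nm m a = card (S m [a])"

lemma Nm_ge1: "Nm m a \<ge> 1"
  using S_fin S_ne by (simp add: Nm_def Suc_le_eq card_gt_0_iff)

lemma card_S: "card (S m w) = prod_list (map (Nm m) w)"
proof (induction w)
  case Nil then show ?case by simp
next
  case (Cons c w)
  have "card (S m (c # w)) = card (S m [c]) * card (S m w)"
    unfolding SS_Cons[of _ _ c w] by (rule card_conc[where l="len m c"]) (auto simp: length_S1 S_fin)
  then show ?case using Cons by (simp add: Nm_def)
qed


lemma K_spec: "(Kof \<theta>) > 0 \<and> (\<forall>i j. mat_pow M (Kof \<theta>) i j > 0)"
proof -
  have "\<exists>k. k > 0 \<and> (\<forall>i j. mat_pow M k i j > 0)"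
    using prim by (simp add: primitive_subst_def primitive_matrix_def)
  then show ?thesis unfolding Kof_def by (rule someI_ex)
qed

lemma K_pos: "(Kof \<theta>) > 0" and K_prop: "mat_pow M (Kof \<theta>) i j > 0" using K_spec by auto

lemma letters_K: "z \<in> S (Kof \<theta>) [a] \<Longrightarrow> b \<in> set z"
  using count_S[of z "Kof \<theta>" a b] K_prop[of b a] count_list_0_iff[of z b] by auto

lemma lang_iff: "u \<in> lang \<theta> \<longleftrightarrow> (\<exists>a m w. w \<in> S m [a] \<and> sublist u w)"
  by (simp add: lang_def SS_single)

lemma lang_sublist: "u \<in> lang \<theta> \<Longrightarrow> sublist v u \<Longrightarrow> v \<in> lang \<theta>"
  unfolding lang_iff by (meson sublist_order.order.trans)

lemma S_sub_lang: "w \<in> S m [a] \<Longrightarrow> w \<in> lang \<theta>"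
  unfolding lang_iff by blast

lemma S_mono_sublist: "sublist v y \<Longrightarrow> z \<in> S m v \<Longrightarrow> \<exists>z'\<in>S m y. sublist z z'"
proof -
  assume "sublist v y" "z \<in> S m v"
  then obtain p q where y: "y = p @ v @ q" by (auto simp: sublist_def)
  obtain p' q' where "p' \<in> S m p" "q' \<in> S m q" using S_ne by blast
  then have "p' @ z @ q' \<in> S m y" unfolding y SS_append using \<open>z \<in> S m v\<close> by (intro concI)
  then show ?thesis by (metis sublist_appendI)
qed

lemma S_lang: "v \<in> lang \<theta> \<Longrightarrow> z \<in> S m v \<Longrightarrow> z \<in> lang \<theta>"
proof -
  assume "v \<in> lang \<theta>" "z \<in> S m v"
  then obtain a k w where w: "w \<in> S k [a]" "sublist v w" unfolding lang_iff by blast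
  then obtain z' where "z' \<in> S m w" "sublist z z'" using S_mono_sublist \<open>z \<in> S m v\<close> by blast
  moreover have "z' \<in> S (m + k) [a]" using w(1) \<open>z' \<in> S m w\<close> by (auto simp: SS_add)
  ultimately show ?thesis unfolding lang_iff by blast
qed

lemma lang_lift: "sublist x z \<Longrightarrow> z \<in> S k [b] \<Longrightarrow> \<exists>z'\<in>S (k + (Kof \<theta>)) [c]. sublist x z'"
proof -
  assume xz: "sublist x z" "z \<in> S k [b]"
  obtain y where y: "y \<in> S (Kof \<theta>) [c]" using S_ne by blast
  then have "b \<in> set y" by (rule letters_K)
  then have "sublist [b] y" by (metis in_set_conv_decomp sublist_appendI append_Cons append_Nil)
  then obtain z' where "z' \<in> S k y" "sublist z z'" using S_mono_sublist xz(2) by blast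
  moreover have "z' \<in> S (k + (Kof \<theta>)) [c]" using y \<open>z' \<in> S k y\<close> by (auto simp: SS_add)
  ultimately show ?thesis using xz(1) by (meson sublist_order.order.trans)
qed

lemma lang_deep: "x \<in> lang \<theta> \<Longrightarrow> \<exists>k\<ge>m. \<exists>b. \<exists>z\<in>S k [b]. sublist x z"
proof -
  assume "x \<in> lang \<theta>"
  then obtain a k z where z: "z \<in> S k [a]" "sublist x z" unfolding lang_iff by blast
  have "\<exists>z'\<in>S (k + j * (Kof \<theta>)) [a]. sublist x z'" for j
  proof (induction j)
    case 0 then show ?case using z by auto
  next
    case (Suc j)
    then obtain z' where "z' \<in> S (k + j * (Kof \<theta>)) [a]" "sublist x z'" by blast
    from lang_lift[OF this(2,1), of a] show ?case by (simp add: algebra_simps)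
  qed
  moreover have "k + m * (Kof \<theta>) \<ge> m" using K_pos by (simp add: trans_le_add2)
  ultimately show ?thesis by blast
qed


lemma len_le_Lmax: "len m c \<le> Lmaxof \<theta> m" unfolding Lmaxof_def len_def by simp
lemma Lmin_le_len: "Lminof \<theta> m \<le> len m c" unfolding Lminof_def len_def by simp
lemma Lmin_ge1: "Lminof \<theta> m \<ge> 1"
  unfolding Lminof_def using len_ge1 by (simp add: Min_ge_iff len_def)
lemma Lmax_ex: "\<exists>c. len m c = Lmaxof \<theta> m"
proof -
  have "Max (range (lenof \<theta> m)) \<in> range (lenof \<theta> m)" by (rule Max_in) auto
  then show ?thesis unfolding Lmaxof_def len_def by (metis rangeE)
qed
lemma Lmin_ex: "\<exists>c. len m c = Lminof \<theta> m"
proof -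
  have "Min (range (lenof \<theta> m)) \<in> range (lenof \<theta> m)" by (rule Min_in) auto
  then show ?thesis unfolding Lminof_def len_def by (metis rangeE)
qed

lemma cover_prefix: "z \<in> S m y \<Longrightarrow> n \<le> length z \<Longrightarrow>
  \<exists>V w. prefix V y \<and> w \<in> S m V \<and> take n z = take n w \<and> n \<le> length w \<and> length w \<le> n + Lmaxof \<theta> m"
proof (induction y arbitrary: z n)
  case Nil then show ?case by (intro exI[of _ "[]"]) auto
next
  case (Cons c y)
  then obtain zc z' where zz: "zc \<in> S m [c]" "z' \<in> S m y" "z = zc @ z'"
    by (auto simp: SS_Cons[of _ _ c y] conc_iff)
  have lzc: "length zc = len m c" using zz(1) by (rule length_S1)
  show ?case
  proof (cases "n \<le> length zc")
    case True
    then show ?thesis using zz lzc len_le_Lmax[of m c]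
      by (intro exI[of _ "[c]"] exI[of _ zc]) auto
  next
    case False
    then have "n - length zc \<le> length z'" using Cons.prems(2) zz(3) by simp
    from Cons.IH[OF zz(2) this] obtain V w where
      Vw: "prefix V y" "w \<in> S m V" "take (n - length zc) z' = take (n - length zc) w"
        "n - length zc \<le> length w" "length w \<le> n - length zc + Lmaxof \<theta> m" by blast
    have "zc @ w \<in> S m (c # V)" unfolding SS_Cons[of _ _ c V] using zz(1) Vw(2) by (rule concI)
    then show ?thesis using Vw False zz(3)
      by (intro exI[of _ "c # V"] exI[of _ "zc @ w"]) auto
  qed
qed

lemma cover_sub: "z \<in> S m y \<Longrightarrow> i + n \<le> length z \<Longrightarrow>
  \<exists>V w j. sublist V y \<and> w \<in> S m V \<and> take n (drop i z) = take n (drop j w) \<and>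
     j + n \<le> length w \<and> length w \<le> n + 2 * Lmaxof \<theta> m"
proof (induction y arbitrary: z i)
  case Nil then show ?case by (intro exI[of _ "[]"] exI[of _ "[]"] exI[of _ 0]) auto
next
  case (Cons c y)
  then obtain zc z' where zz: "zc \<in> S m [c]" "z' \<in> S m y" "z = zc @ z'"
    by (auto simp: SS_Cons[of _ _ c y] conc_iff)
  have lzc: "length zc = len m c" using zz(1) by (rule length_S1)
  show ?case
  proof (cases "length zc \<le> i")
    case True
    then have "i - length zc + n \<le> length z'" using Cons.prems(2) zz(3) by simp
    from Cons.IH[OF zz(2) this] obtain V w j where
      Vw: "sublist V y" "w \<in> S m V" "take n (drop (i - length zc) z') = take n (drop j w)"
        "j + n \<le> length w" "length w \<le> n + 2 * Lmaxof \<theta> m" by blast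
    have "sublist V (c # y)" using Vw(1) by (meson sublist_Cons_right)
    then show ?thesis using Vw True zz(3) by (intro exI[of _ V] exI[of _ w] exI[of _ j]) auto
  next
    case False
    show ?thesis
    proof (cases "n \<le> length zc - i")
      case True
      have "sublist [c] (c # y)" by simp
      then show ?thesis using zz(1,3) True False lzc len_le_Lmax[of m c]
        by (intro exI[of _ "[c]"] exI[of _ zc] exI[of _ i]) auto
    next
      case n: False
      let ?n' = "n - (length zc - i)"
      have "?n' \<le> length z'" using Cons.prems(2) zz(3) False by simp
      from cover_prefix[OF zz(2) this] obtain V w where
        Vw: "prefix V y" "w \<in> S m V" "take ?n' z' = take ?n' w" "?n' \<le> length w" "length w \<le> ?n' + Lmaxof \<theta> m"
        by blast
      have mem: "zc @ w \<in> S m (c # V)" unfolding SS_Cons[of _ _ c V] using zz(1) Vw(2) by (rule concI)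
      have sub: "sublist (c # V) (c # y)" using Vw(1) by (metis Cons_prefix_Cons prefix_imp_sublist)
      have "take n (drop i (zc @ z')) = drop i zc @ take ?n' z'" using False n by simp
      also have "\<dots> = take n (drop i (zc @ w))" using False n Vw(3) by simp
      finally have eq: "take n (drop i z) = take n (drop i (zc @ w))" using zz(3) by simp
      have "length zc \<le> Lmaxof \<theta> m" using lzc len_le_Lmax[of m c] by simp
      then show ?thesis using mem sub eq Vw(4,5) False n
        by (intro exI[of _ "c # V"] exI[of _ "zc @ w"] exI[of _ i]) auto
    qed
  qed
qed

lemma g_eq: "gof \<theta> m a = ln (real (Nm m a))" by (simp add: gof_def Nm_def SS_single)
lemma g_nonneg: "gof \<theta> m a \<ge> 0" using Nm_ge1[of m a] by (simp add: g_eq)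
lemma exp_g: "exp (gof \<theta> m a) = real (Nm m a)" using Nm_ge1[of m a] by (simp add: g_eq)
lemma len_eq: "lenof \<theta> m a = len m a" by (simp add: len_def)
lemma rat_nonneg: "ratof \<theta> m a \<ge> 0" by (simp add: ratof_def g_nonneg)
lemma rat_le_rho: "ratof \<theta> m a \<le> rhoof \<theta> m" unfolding rhoof_def by simp
lemma sig_le_rat: "sigof \<theta> m \<le> ratof \<theta> m a" unfolding sigof_def by simp
lemma rho_ex: "\<exists>c. ratof \<theta> m c = rhoof \<theta> m"
proof -
  have "Max (range (ratof \<theta> m)) \<in> range (ratof \<theta> m)" by (rule Max_in) auto
  then show ?thesis unfolding rhoof_def by (metis rangeE)
qed
lemma sig_ex: "\<exists>c. ratof \<theta> m c = sigof \<theta> m"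
proof -
  have "Min (range (ratof \<theta> m)) \<in> range (ratof \<theta> m)" by (rule Min_in) auto
  then show ?thesis unfolding sigof_def by (metis rangeE)
qed
lemma sig_nonneg: "sigof \<theta> m \<ge> 0" using sig_ex[of m] rat_nonneg by metis
lemma sig_le_rho: "sigof \<theta> m \<le> rhoof \<theta> m" using sig_le_rat rat_le_rho by (meson order.trans)

lemma g_le_rho: "gof \<theta> m a \<le> rhoof \<theta> m * real (len m a)"
  using rat_le_rho[of m a] len_ge1[of m a] by (simp add: ratof_def len_eq pos_divide_le_eq)
lemma g_ge_sig: "sigof \<theta> m * real (len m a) \<le> gof \<theta> m a"
  using sig_le_rat[of m a] len_ge1[of m a] by (simp add: ratof_def len_eq pos_le_divide_eq)

lemma prod_Nm_le: "real (prod_list (map (Nm m) V)) \<le> exp (rhoof \<theta> m * real (sum_list (map (len m) V)))"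
proof (induction V)
  case Nil then show ?case by simp
next
  case (Cons c V)
  have "real (Nm m c) \<le> exp (rhoof \<theta> m * real (len m c))"
    using g_le_rho[of m c] exp_g[of m c] by (metis exp_le_cancel_iff)
  then have "real (Nm m c) * real (prod_list (map (Nm m) V)) \<le>
      exp (rhoof \<theta> m * real (len m c)) * exp (rhoof \<theta> m * real (sum_list (map (len m) V)))"
    using Cons by (intro mult_mono) auto
  then show ?case by (simp add: exp_add[symmetric] algebra_simps)
qed

lemma prod_Nm_ge: "exp (sigof \<theta> m * real (sum_list (map (len m) V))) \<le> real (prod_list (map (Nm m) V))"
proof (induction V)
  case Nil then show ?case by simp
next
  case (Cons c V)
  have "exp (sigof \<theta> m * real (len m c)) \<le> real (Nm m c)"
    using g_ge_sig[of m c] exp_g[of m c] by (metis exp_le_cancel_iff)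
  then have "exp (sigof \<theta> m * real (len m c)) * exp (sigof \<theta> m * real (sum_list (map (len m) V))) \<le>
      real (Nm m c) * real (prod_list (map (Nm m) V))"
    using Cons by (intro mult_mono) auto
  then show ?case by (simp add: exp_add[symmetric] algebra_simps)
qed

lemma ln_prod_Nm: "ln (real (prod_list (map (Nm m) V))) = sum_list (map (gof \<theta> m) V)"
proof (induction V)
  case Nil then show ?case by simp
next
  case (Cons c V)
  have "prod_list (map (Nm m) V) \<ge> 1"
  proof (induction V)
    case (Cons d V)
    have "1 * 1 \<le> Nm m d * prod_list (map (Nm m) V)" using Nm_ge1[of m d] Cons by (intro mult_le_mono)
    then show ?case by simp
  qed simp
  then show ?case using Cons Nm_ge1[of m c] by (simp add: ln_mult g_eq)
qed

lemma len_add_K: "y \<in> S (Kof \<theta>) [a] \<Longrightarrow> len (m + Kof \<theta>) a = sum_list (map (len m) y)"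
proof -
  assume y: "y \<in> S (Kof \<theta>) [a]"
  obtain z where z: "z \<in> S m y" using S_ne by blast
  then have "z \<in> S (m + Kof \<theta>) [a]" using y by (auto simp: SS_add)
  then show ?thesis using length_S1 length_S z by metis
qed

abbreviation W where "W \<equiv> Lmaxof \<theta> (Kof \<theta>)"

lemma len_K_le: "y \<in> S (Kof \<theta>) [a] \<Longrightarrow> length y \<le> Lmaxof \<theta> (Kof \<theta>)"
  using length_S1 len_le_Lmax by metis

lemma setK: "y \<in> S (Kof \<theta>) [a] \<Longrightarrow> set y = UNIV" using letters_K by blast

lemma Lmax_K_step: "Lmaxof \<theta> (m + Kof \<theta>) \<le> Lmaxof \<theta> (Kof \<theta>) * Lmaxof \<theta> m"
proof -
  obtain a where a: "len (m + Kof \<theta>) a = Lmaxof \<theta> (m + Kof \<theta>)" using Lmax_ex by blast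
  obtain y where y: "y \<in> S (Kof \<theta>) [a]" using S_ne by blast
  have "sum_list (map (len m) y) \<le> length y * Lmaxof \<theta> m"
    using sum_list_le_bound[of y "len m" "Lmaxof \<theta> m"] len_le_Lmax by simp
  also have "\<dots> \<le> Lmaxof \<theta> (Kof \<theta>) * Lmaxof \<theta> m" using len_K_le[OF y] by simp
  finally show ?thesis using a len_add_K[OF y, of m] by simp
qed

lemma Lmin_K_step: "Lmaxof \<theta> m \<le> Lminof \<theta> (m + Kof \<theta>)"
proof -
  obtain a where a: "len (m + Kof \<theta>) a = Lminof \<theta> (m + Kof \<theta>)" using Lmin_ex by blast
  obtain c where c: "len m c = Lmaxof \<theta> m" using Lmax_ex by blast
  obtain y where y: "y \<in> S (Kof \<theta>) [a]" using S_ne by blast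
  have "c \<in> set y" using setK[OF y] by simp
  then have "len m c \<le> sum_list (map (len m) y)" by (simp add: member_le_sum_list)
  then show ?thesis using a c len_add_K[OF y, of m] by simp
qed

lemma Lmin_double: "CARD('a) \<ge> 2 \<Longrightarrow> 2 * Lminof \<theta> m \<le> Lminof \<theta> (m + Kof \<theta>)"
proof -
  assume card: "CARD('a) \<ge> 2"
  obtain a where a: "len (m + Kof \<theta>) a = Lminof \<theta> (m + Kof \<theta>)" using Lmin_ex by blast
  obtain y where y: "y \<in> S (Kof \<theta>) [a]" using S_ne by blast
  have "2 \<le> card (set y)" using setK[OF y] card by simp
  also have "\<dots> \<le> length y" by (rule card_length)
  finally have "2 * Lminof \<theta> m \<le> length y * Lminof \<theta> m" by simp
  also have "\<dots> \<le> sum_list (map (len m) y)"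
    using sum_list_ge_bound[of y "Lminof \<theta> m" "len m"] Lmin_le_len by simp
  finally show ?thesis using a len_add_K[OF y, of m] by simp
qed

lemma g_add_K: "y \<in> S (Kof \<theta>) [a] \<Longrightarrow> sum_list (map (gof \<theta> m) y) \<le> gof \<theta> (m + Kof \<theta>) a"
proof -
  assume y: "y \<in> S (Kof \<theta>) [a]"
  have sub: "S m y \<subseteq> S (m + Kof \<theta>) [a]" using y by (auto simp: SS_add)
  have "card (S m y) \<le> Nm (m + Kof \<theta>) a" unfolding Nm_def using sub S_fin by (rule card_mono[rotated])
  moreover have "card (S m y) \<ge> 1" using S_fin S_ne by (simp add: Suc_le_eq card_gt_0_iff)
  ultimately have "ln (real (card (S m y))) \<le> ln (real (Nm (m + Kof \<theta>) a))" by simp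
  then show ?thesis by (simp add: card_S ln_prod_Nm g_eq)
qed

lemma mixing: "ratof \<theta> (m + Kof \<theta>) a \<ge> sigof \<theta> m +
    (rhoof \<theta> m - sigof \<theta> m) * real (Lminof \<theta> m) / (real W * real (Lmaxof \<theta> m))"
proof -
  let ?s = "sigof \<theta> m" and ?r = "rhoof \<theta> m"
  obtain y where y: "y \<in> S (Kof \<theta>) [a]" using S_ne by blast
  obtain c where c: "ratof \<theta> m c = ?r" using rho_ex by blast
  have cy: "c \<in> set y" using setK[OF y] by simp
  have L: "real (len (m + Kof \<theta>) a) = sum_list (map (\<lambda>x. real (len m x)) y)"
  proof -
    have "real (sum_list (map (len m) y)) = sum_list (map (\<lambda>x. real (len m x)) y)" by (induction y) auto
    then show ?thesis using len_add_K[OF y, of m] by simp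
  qed
  have Lpos: "real (len (m + Kof \<theta>) a) > 0" using len_ge1[of "m + Kof \<theta>" a] by simp
  have gc: "gof \<theta> m c = ?r * real (len m c)"
    using c len_ge1[of m c] by (simp add: ratof_def len_eq field_simps)
  have "sum_list (map (gof \<theta> m) y) = sum_list (map (\<lambda>x. gof \<theta> m x - ?s * real (len m x)) y)
        + ?s * sum_list (map (\<lambda>x. real (len m x)) y)"
    by (induction y) (auto simp: algebra_simps)
  also have "\<dots> \<ge> (gof \<theta> m c - ?s * real (len m c)) + ?s * sum_list (map (\<lambda>x. real (len m x)) y)"
    using elem_le_sum_list_nonneg[OF cy, of "\<lambda>x. gof \<theta> m x - ?s * real (len m x)"] g_ge_sig
    by (auto simp: algebra_simps)
  finally have "(?r - ?s) * real (len m c) + ?s * real (len (m + Kof \<theta>) a) \<le> gof \<theta> (m + Kof \<theta>) a"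
    using g_add_K[OF y, of m] L gc by (simp add: algebra_simps)
  then have "((?r - ?s) * real (len m c) + ?s * real (len (m + Kof \<theta>) a)) / real (len (m + Kof \<theta>) a)
      \<le> gof \<theta> (m + Kof \<theta>) a / real (len (m + Kof \<theta>) a)"
    using Lpos by (intro divide_right_mono) auto
  moreover have "((?r - ?s) * real (len m c) + ?s * real (len (m + Kof \<theta>) a)) / real (len (m + Kof \<theta>) a)
      = ?s + (?r - ?s) * real (len m c) / real (len (m + Kof \<theta>) a)"
    using Lpos by (simp add: add_divide_distrib)
  ultimately have main: "?s + (?r - ?s) * real (len m c) / real (len (m + Kof \<theta>) a) \<le> ratof \<theta> (m + Kof \<theta>) a"
    by (simp add: ratof_def len_eq)
  have rs: "?r - ?s \<ge> 0" using sig_le_rho by simp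
  have num: "real (Lminof \<theta> m) \<le> real (len m c)" using Lmin_le_len by simp
  have "real (len (m + Kof \<theta>) a) \<le> real W * real (Lmaxof \<theta> m)"
    using Lmax_K_step[of m] len_le_Lmax[of "m + Kof \<theta>" a]
    by (metis of_nat_le_iff of_nat_mult order.trans)
  moreover have "real (Lminof \<theta> m) \<ge> 1" using Lmin_ge1 by simp
  ultimately have "real (Lminof \<theta> m) / (real W * real (Lmaxof \<theta> m)) \<le> real (len m c) / real (len (m + Kof \<theta>) a)"
    using num Lpos by (intro frac_le) auto
  then have "(?r - ?s) * (real (Lminof \<theta> m) / (real W * real (Lmaxof \<theta> m))) \<le>
      (?r - ?s) * (real (len m c) / real (len (m + Kof \<theta>) a))"
    using rs by (rule mult_left_mono)
  then show ?thesis using main by (simp add: algebra_simps)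
qed

lemma mixing2: "sigof \<theta> (m + 2 * Kof \<theta>) \<ge> sigof \<theta> (m + Kof \<theta>) +
    (rhoof \<theta> (m + Kof \<theta>) - sigof \<theta> (m + Kof \<theta>)) / (real W * real W)"
proof -
  let ?m = "m + Kof \<theta>"
  obtain a where a: "ratof \<theta> (?m + Kof \<theta>) a = sigof \<theta> (?m + Kof \<theta>)" using sig_ex by blast
  have W1: "real W \<ge> 1" using len_le_Lmax[of "Kof \<theta>" a] len_ge1[of "Kof \<theta>" a] by simp
  have Lm1: "real (Lmaxof \<theta> m) \<ge> 1" using len_le_Lmax[of m a] len_ge1[of m a] by simp
  have rs: "rhoof \<theta> ?m - sigof \<theta> ?m \<ge> 0" using sig_le_rho by simp
  have A: "real (Lmaxof \<theta> m) \<le> real (Lminof \<theta> ?m)" using Lmin_K_step by simp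
  have B: "real (Lmaxof \<theta> ?m) \<le> real W * real (Lmaxof \<theta> m)"
    using Lmax_K_step[of m] by (metis of_nat_le_iff of_nat_mult)
  have "1 / (real W * real W) = real (Lmaxof \<theta> m) / (real W * (real W * real (Lmaxof \<theta> m)))"
    using Lm1 W1 by (simp add: field_simps)
  also have "\<dots> \<le> real (Lminof \<theta> ?m) / (real W * real (Lmaxof \<theta> ?m))"
  proof (rule frac_le)
    show "0 \<le> real (Lminof \<theta> ?m)" by simp
    show "real (Lmaxof \<theta> m) \<le> real (Lminof \<theta> ?m)" by (rule A)
    have "real (Lmaxof \<theta> ?m) \<ge> 1" using len_le_Lmax[of ?m a] len_ge1[of ?m a] by simp
    then show "0 < real W * real (Lmaxof \<theta> ?m)" using W1 by simp
    show "real W * real (Lmaxof \<theta> ?m) \<le> real W * (real W * real (Lmaxof \<theta> m))"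
      using B W1 by (intro mult_left_mono) auto
  qed
  finally have "(rhoof \<theta> ?m - sigof \<theta> ?m) * (1 / (real W * real W)) \<le>
     (rhoof \<theta> ?m - sigof \<theta> ?m) * (real (Lminof \<theta> ?m) / (real W * real (Lmaxof \<theta> ?m)))"
    using rs by (rule mult_left_mono)
  then have "sigof \<theta> ?m + (rhoof \<theta> ?m - sigof \<theta> ?m) / (real W * real W) \<le> ratof \<theta> (?m + Kof \<theta>) a"
    using mixing[of ?m a] by simp
  moreover have eq: "m + 2 * Kof \<theta> = ?m + Kof \<theta>" by simp
  ultimately show ?thesis using a by (simp only: eq)
qed

lemma finite_lang_len: "finite (lang_len \<theta> n)"
proof (rule finite_subset)
  show "lang_len \<theta> n \<subseteq> {xs. set xs \<subseteq> UNIV \<and> length xs = n}" by (auto simp: lang_len_def)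
qed (rule finite_lists_length_eq, simp)

lemma card_lang_sub: "card (lang_len \<theta> (m + n)) \<le> card (lang_len \<theta> m) * card (lang_len \<theta> n)"
proof -
  have "inj_on (\<lambda>x. (take m x, drop m x)) (lang_len \<theta> (m + n))"
    by (rule inj_onI) (metis append_take_drop_id prod.inject)
  moreover have "(\<lambda>x. (take m x, drop m x)) ` lang_len \<theta> (m + n) \<subseteq> lang_len \<theta> m \<times> lang_len \<theta> n"
  proof
    fix p assume "p \<in> (\<lambda>x. (take m x, drop m x)) ` lang_len \<theta> (m + n)"
    then obtain x where x: "x \<in> lang \<theta>" "length x = m + n" "p = (take m x, drop m x)"
      by (auto simp: lang_len_def)
    have "sublist (take m x) x" "sublist (drop m x) x" by (auto intro: prefix_imp_sublist suffix_imp_sublist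
        take_is_prefix suffix_drop)
    then show "p \<in> lang_len \<theta> m \<times> lang_len \<theta> n" using x lang_sublist by (auto simp: lang_len_def)
  qed
  ultimately have "card (lang_len \<theta> (m + n)) \<le> card (lang_len \<theta> m \<times> lang_len \<theta> n)"
    using finite_lang_len by (metis card_inj_on_le finite_SigmaI)
  then show ?thesis by (simp add: card_cartesian_product)
qed

abbreviation la where "la n \<equiv> ln (real (card (lang_len \<theta> n)))"

lemma la_nonneg: "la n \<ge> 0"
  by (cases "card (lang_len \<theta> n) = 0") auto

lemma la_sub: "la (m + n) \<le> la m + la n"
proof (cases "card (lang_len \<theta> (m + n)) = 0")
  case True then show ?thesis using la_nonneg[of m] la_nonneg[of n] by simp
next
  case False
  have "card (lang_len \<theta> m) * card (lang_len \<theta> n) > 0"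
    using False card_lang_sub[of m n] by (metis gr_zeroI le_zero_eq)
  then have pos: "card (lang_len \<theta> m) > 0" "card (lang_len \<theta> n) > 0" by auto
  have r: "real (card (lang_len \<theta> (m + n))) \<le> real (card (lang_len \<theta> m) * card (lang_len \<theta> n))"
    using card_lang_sub[of m n] by (metis of_nat_le_iff)
  have p0: "0 < real (card (lang_len \<theta> (m + n)))" using False by simp
  have "la (m + n) \<le> ln (real (card (lang_len \<theta> m) * card (lang_len \<theta> n)))"
    using p0 r pos by (subst ln_le_cancel_iff) (simp_all del: of_nat_mult)
  also have "\<dots> = la m + la n" using pos by (simp add: ln_mult)
  finally show ?thesis .
qed

lemma h_tendsto: "(\<lambda>n. la n / real n) \<longlonglongrightarrow> entof \<theta>"
  unfolding entof_def by (rule fekete(1)[OF la_sub la_nonneg])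

lemma ent_le_h: "n \<ge> 1 \<Longrightarrow> entof \<theta> \<le> la n / real n"
  unfolding entof_def by (rule fekete(2)[OF la_sub la_nonneg])

lemma rs_entropy_eq: "rs_entropy \<theta> = entof \<theta>"
  unfolding rs_entropy_def using h_tendsto by (rule limI)

lemma count_bound:
  fixes m n :: nat
  defines "c \<equiv> 2 * Lmaxof \<theta> m"
  shows "la n \<le> 2 * ln (real (n + c + 1)) + real (n + c) / real (Lminof \<theta> m) * ln (real CARD('a))
     + rhoof \<theta> m * real (n + c)"
proof -
  let ?L = "Lminof \<theta> m"
  define T where "T = (n + c) div ?L"
  define Vs where "Vs = {V::'a list. sum_list (map (len m) V) \<le> n + c}"
  define Ws where "Ws = (\<Union>V\<in>Vs. S m V)"
  have Lpos: "?L > 0" using Lmin_ge1[of m] by simp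
  have VsT: "Vs \<subseteq> {V. set V \<subseteq> UNIV \<and> length V \<le> T}"
  proof
    fix V assume "V \<in> Vs"
    then have "length V * ?L \<le> n + c"
      using sum_list_ge_bound[of V ?L "len m"] Lmin_le_len by (auto simp: Vs_def)
    then show "V \<in> {V. set V \<subseteq> UNIV \<and> length V \<le> T}"
      using Lpos by (simp add: T_def less_eq_div_iff_mult_less_eq)
  qed
  have finVs: "finite Vs" using VsT by (rule finite_subset) (rule finite_lists_length_le, simp)
  have cardVs: "card Vs \<le> (T + 1) * CARD('a) ^ T"
  proof -
    have "card Vs \<le> card {V::'a list. set V \<subseteq> UNIV \<and> length V \<le> T}"
      using VsT by (rule card_mono[rotated]) (rule finite_lists_length_le, simp)
    also have "\<dots> = (\<Sum>i\<le>T. CARD('a) ^ i)" using card_lists_length_le[of "UNIV::'a set" T] by simp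
    also have "\<dots> \<le> card {..T} * CARD('a) ^ T"
    proof -
      have "(\<Sum>i\<le>T. CARD('a) ^ i) \<le> of_nat (card {..T}) * CARD('a) ^ T"
        by (rule sum_bounded_above) (rule power_increasing, auto simp: Suc_le_eq)
      then show ?thesis by simp
    qed
    finally show ?thesis by simp
  qed
  have sub: "lang_len \<theta> n \<subseteq> (\<lambda>(w, j). take n (drop j w)) ` (Ws \<times> {0..n + c})"
  proof
    fix x assume "x \<in> lang_len \<theta> n"
    then have x: "x \<in> lang \<theta>" "length x = n" by (auto simp: lang_len_def)
    obtain k b z where kz: "k \<ge> m" "z \<in> S k [b]" "sublist x z" using lang_deep[OF x(1), of m] by blast
    have "S k [b] = S (m + (k - m)) [b]" using kz(1) by simp
    then obtain y where y: "z \<in> S m y" using kz(2) by (auto simp: SS_add)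
    obtain p q where pq: "z = p @ x @ q" using kz(3) by (auto simp: sublist_def)
    have xz: "x = take n (drop (length p) z)" "length p + n \<le> length z" using pq x(2) by auto
    obtain V w j where Vw: "w \<in> S m V" "take n (drop (length p) z) = take n (drop j w)"
       "j + n \<le> length w" "length w \<le> n + 2 * Lmaxof \<theta> m"
      using cover_sub[OF y xz(2)] by blast
    have "V \<in> Vs" using Vw(1,4) length_S[OF Vw(1)] by (simp add: Vs_def c_def)
    then have "w \<in> Ws" using Vw(1) by (auto simp: Ws_def)
    moreover have "j \<in> {0..n + c}" using Vw(3,4) by (simp add: c_def)
    ultimately show "x \<in> (\<lambda>(w, j). take n (drop j w)) ` (Ws \<times> {0..n + c})"
      using xz(1) Vw(2) by force
  qed
  have finWs: "finite Ws" unfolding Ws_def using finVs S_fin by blast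
  have "card (lang_len \<theta> n) \<le> card ((\<lambda>(w, j). take n (drop j w)) ` (Ws \<times> {0..n + c}))"
    using sub finWs by (intro card_mono) auto
  also have "\<dots> \<le> card (Ws \<times> {0..n + c})" using finWs by (intro card_image_le) auto
  also have "\<dots> = card Ws * (n + c + 1)" by (simp add: card_cartesian_product)
  finally have c1: "real (card (lang_len \<theta> n)) \<le> real (card Ws) * real (n + c + 1)"
    by (metis of_nat_le_iff of_nat_mult)
  have "real (card Ws) \<le> real (\<Sum>V\<in>Vs. card (S m V))"
    unfolding Ws_def using card_UN_le[OF finVs, of "S m"] by linarith
  also have "\<dots> = (\<Sum>V\<in>Vs. real (prod_list (map (Nm m) V)))" by (simp add: card_S)
  also have "\<dots> \<le> (\<Sum>V\<in>Vs. exp (rhoof \<theta> m * real (n + c)))"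
  proof (rule sum_mono)
    fix V assume "V \<in> Vs"
    then have "real (sum_list (map (len m) V)) \<le> real (n + c)" by (simp add: Vs_def)
    then have "rhoof \<theta> m * real (sum_list (map (len m) V)) \<le> rhoof \<theta> m * real (n + c)"
      using sig_le_rho[of m] sig_nonneg[of m] by (intro mult_left_mono) auto
    then show "real (prod_list (map (Nm m) V)) \<le> exp (rhoof \<theta> m * real (n + c))"
      using prod_Nm_le[of m V] by (meson exp_le_cancel_iff order.trans)
  qed
  also have "\<dots> = real (card Vs) * exp (rhoof \<theta> m * real (n + c))" by simp
  also have "\<dots> \<le> real ((T + 1) * CARD('a) ^ T) * exp (rhoof \<theta> m * real (n + c))"
  proof -
    have "real (card Vs) \<le> real ((T + 1) * CARD('a) ^ T)" using cardVs by (simp only: of_nat_le_iff)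
    then show ?thesis by (intro mult_right_mono) auto
  qed
  finally have c2: "real (card Ws) \<le> real (T + 1) * real CARD('a) ^ T * exp (rhoof \<theta> m * real (n + c))"
    by (simp add: algebra_simps)
  have Tle: "real T \<le> real (n + c) / real ?L"
  proof -
    have "T * ?L \<le> n + c" unfolding T_def by (rule div_times_less_eq_dividend)
    then have "real T * real ?L \<le> real (n + c)" by (metis of_nat_le_iff of_nat_mult)
    then show ?thesis using Lpos by (simp add: pos_le_divide_eq)
  qed
  have T1: "real (T + 1) \<le> real (n + c + 1)"
  proof -
    have "T \<le> n + c" unfolding T_def by simp
    then show ?thesis by simp
  qed
  show ?thesis
  proof (cases "card (lang_len \<theta> n) = 0")
    case True
    have "0 \<le> ln (real (n + c + 1))" by simp
    moreover have "0 \<le> real (n + c) / real ?L * ln (real CARD('a))" by simp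
    moreover have "0 \<le> rhoof \<theta> m * real (n + c)" using sig_le_rho[of m] sig_nonneg[of m] by simp
    ultimately show ?thesis using True by simp
  next
    case False
    have "real (card (lang_len \<theta> n)) \<le>
       real (T + 1) * real CARD('a) ^ T * exp (rhoof \<theta> m * real (n + c)) * real (n + c + 1)"
      using c1 c2 by (meson mult_right_mono of_nat_0_le_iff order.trans)
    then have "la n \<le> ln (real (T + 1) * real CARD('a) ^ T * exp (rhoof \<theta> m * real (n + c)) * real (n + c + 1))"
      using False by (subst ln_le_cancel_iff) auto
    also have "\<dots> = ln (real (T + 1)) + real T * ln (real CARD('a)) + rhoof \<theta> m * real (n + c) + ln (real (n + c + 1))"
      by (simp add: ln_mult ln_realpow)
    also have "\<dots> \<le> ln (real (n + c + 1)) + real (n + c) / real ?L * ln (real CARD('a)) + rhoof \<theta> m * real (n + c) + ln (real (n + c + 1))"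
      using T1 Tle by (intro add_mono mult_right_mono) auto
    finally show ?thesis by simp
  qed
qed

end

context rs begin

lemma ln_over_n_shift: "(\<lambda>n. ln (real n + c) / real n) \<longlonglongrightarrow> 0" if "c \<ge> 1" for c :: real
proof (rule tendsto_sandwich[of "\<lambda>n. 0" _ _ "\<lambda>n. ln (c + 1) / real n + ln (real n) / real n"])
  show "\<forall>\<^sub>F n in sequentially. 0 \<le> ln (real n + c) / real n" using that by simp
  show "\<forall>\<^sub>F n in sequentially. ln (real n + c) / real n \<le> ln (c + 1) / real n + ln (real n) / real n"
    using eventually_ge_at_top[of 1]
  proof (rule eventually_mono)
    fix n :: nat assume n: "n \<ge> 1"
    have "real n + c \<le> (c + 1) * real n" using n that by (simp add: algebra_simps)
    then have "ln (real n + c) \<le> ln ((c + 1) * real n)" using n that by (subst ln_le_cancel_iff) auto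
    also have "\<dots> = ln (c + 1) + ln (real n)" using n that by (simp add: ln_mult)
    finally show "ln (real n + c) / real n \<le> ln (c + 1) / real n + ln (real n) / real n"
      using n by (simp add: add_divide_distrib[symmetric] divide_right_mono)
  qed
  show "(\<lambda>n. 0) \<longlonglongrightarrow> (0::real)" by simp
  show "(\<lambda>n. ln (c + 1) / real n + ln (real n) / real n) \<longlonglongrightarrow> 0"
    using tendsto_add[OF lim_const_over_n[of "ln (c + 1)"] lim_ln_over_n] by simp
qed

lemma ent_le_rho: "entof \<theta> \<le> rhoof \<theta> m + ln (real CARD('a)) / real (Lminof \<theta> m)"
proof -
  define c where "c = 2 * Lmaxof \<theta> m"
  let ?L = "real (Lminof \<theta> m)" and ?A = "ln (real CARD('a))" and ?r = "rhoof \<theta> m"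
  define G where "G n = (2 * ln (real (n + c + 1)) + real (n + c) / ?L * ?A + ?r * real (n + c)) / real n" for n
  have G_alt: "G n = 2 * (ln (real n + (real c + 1)) / real n) + (?A / ?L + ?r) * (1 + real c / real n)"
    if "n \<ge> 1" for n
    using that Lmin_ge1[of m] by (simp add: G_def field_simps add.assoc)
  have "((\<lambda>n. 2 * (ln (real n + (real c + 1)) / real n) + (?A / ?L + ?r) * (1 + real c / real n))
      \<longlongrightarrow> 2 * 0 + (?A / ?L + ?r) * (1 + 0)) sequentially"
    by (intro tendsto_intros ln_over_n_shift) auto
  then have "((\<lambda>n. 2 * (ln (real n + (real c + 1)) / real n) + (?A / ?L + ?r) * (1 + real c / real n))
      \<longlongrightarrow> ?r + ?A / ?L) sequentially" by (simp add: add.commute)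
  then have "G \<longlonglongrightarrow> ?r + ?A / ?L"
    by (rule Lim_transform_eventually) (auto intro!: eventually_mono[OF eventually_ge_at_top[of 1]] simp: G_alt)
  moreover have "\<forall>\<^sub>F n in sequentially. entof \<theta> \<le> G n"
    using eventually_ge_at_top[of 1]
  proof (rule eventually_mono)
    fix n :: nat assume n: "n \<ge> 1"
    have "entof \<theta> \<le> la n / real n" using n by (rule ent_le_h)
    also have "\<dots> \<le> G n" unfolding G_def using count_bound[of n m] n
      by (intro divide_right_mono) (auto simp: c_def)
    finally show "entof \<theta> \<le> G n" .
  qed
  ultimately show ?thesis by (intro tendsto_lowerbound) auto
qed

lemma Lmin_pow: "CARD('a) \<ge> 2 \<Longrightarrow> 2 ^ j \<le> Lminof \<theta> (r + j * Kof \<theta>)"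
proof (induction j)
  case 0 then show ?case using Lmin_ge1 by simp
next
  case (Suc j)
  have "2 ^ Suc j \<le> 2 * Lminof \<theta> (r + j * Kof \<theta>)" using Suc by simp
  also have "\<dots> \<le> Lminof \<theta> (r + j * Kof \<theta> + Kof \<theta>)" using Lmin_double Suc.prems by blast
  finally show ?case by (simp add: algebra_simps)
qed

lemma small_term: "\<epsilon> > 0 \<Longrightarrow> \<exists>m0. \<forall>m\<ge>m0. ln (real CARD('a)) / real (Lminof \<theta> m) \<le> \<epsilon>"
proof -
  assume e: "\<epsilon> > 0"
  show ?thesis
  proof (cases "CARD('a) \<ge> 2")
    case False
    have "0 < CARD('a)" by (rule finite_UNIV_card_ge_0) simp
    then have "CARD('a) = 1" using False by linarith
    then show ?thesis using e by simp
  next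
    case True
    obtain j where j: "ln (real CARD('a)) / \<epsilon> < 2 ^ j" using real_arch_pow[of 2] by auto
    have "\<forall>m\<ge>j * Kof \<theta>. ln (real CARD('a)) / real (Lminof \<theta> m) \<le> \<epsilon>"
    proof (intro allI impI)
      fix m assume m: "m \<ge> j * Kof \<theta>"
      have "2 ^ j \<le> Lminof \<theta> (m - j * Kof \<theta> + j * Kof \<theta>)" using Lmin_pow[OF True] .
      moreover have "m - j * Kof \<theta> + j * Kof \<theta> = m" using m by simp
      ultimately have "2 ^ j \<le> Lminof \<theta> m" by simp
      then have "real (2 ^ j) \<le> real (Lminof \<theta> m)" by (simp only: of_nat_le_iff)
      then have "(2::real) ^ j \<le> real (Lminof \<theta> m)" by simp
      moreover have "ln (real CARD('a)) \<ge> 0" by simp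
      ultimately have "ln (real CARD('a)) / real (Lminof \<theta> m) \<le> ln (real CARD('a)) / 2 ^ j"
        using Lmin_ge1[of m] by (intro divide_left_mono) auto
      also have "\<dots> \<le> \<epsilon>" using j e by (simp add: divide_le_eq pos_divide_less_eq mult.commute less_imp_le)
      finally show "ln (real CARD('a)) / real (Lminof \<theta> m) \<le> \<epsilon>" .
    qed
    then show ?thesis by blast
  qed
qed

lemma sigma_large: "\<epsilon> > 0 \<Longrightarrow> \<exists>m. sigof \<theta> m > entof \<theta> - \<epsilon>"
proof (rule ccontr)
  assume e: "\<epsilon> > 0" and "\<not> (\<exists>m. sigof \<theta> m > entof \<theta> - \<epsilon>)"
  then have sm: "\<And>m. sigof \<theta> m \<le> entof \<theta> - \<epsilon>" by (meson not_less)
  obtain m0 where m0: "\<And>m. m \<ge> m0 \<Longrightarrow> ln (real CARD('a)) / real (Lminof \<theta> m) \<le> \<epsilon> / 2"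
    using small_term[of "\<epsilon> / 2"] e by auto
  have rho: "rhoof \<theta> m \<ge> entof \<theta> - \<epsilon> / 2" if "m \<ge> m0" for m
    using ent_le_rho[of m] m0[OF that] by linarith
  define \<delta> where "\<delta> = \<epsilon> / 2 / (real W * real W)"
  have Wpos: "real W \<ge> 1" using len_le_Lmax[of "Kof \<theta>" undefined] len_ge1[of "Kof \<theta>" undefined] by simp
  have dpos: "\<delta> > 0" using e Wpos by (simp add: \<delta>_def)
  have step: "sigof \<theta> (m0 + Kof \<theta> + Suc j * Kof \<theta>) \<ge> sigof \<theta> (m0 + Kof \<theta> + j * Kof \<theta>) + \<delta>" for j
  proof -
    let ?m = "m0 + j * Kof \<theta>"
    have "rhoof \<theta> (?m + Kof \<theta>) - sigof \<theta> (?m + Kof \<theta>) \<ge> \<epsilon> / 2"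
      using rho[of "?m + Kof \<theta>"] sm[of "?m + Kof \<theta>"] by simp
    then have "(rhoof \<theta> (?m + Kof \<theta>) - sigof \<theta> (?m + Kof \<theta>)) / (real W * real W) \<ge> \<delta>"
      unfolding \<delta>_def using Wpos by (intro divide_right_mono) auto
    then have "sigof \<theta> (?m + 2 * Kof \<theta>) \<ge> sigof \<theta> (?m + Kof \<theta>) + \<delta>" using mixing2[of ?m] by linarith
    moreover have e1: "?m + 2 * Kof \<theta> = m0 + Kof \<theta> + Suc j * Kof \<theta>" by simp
    moreover have e2: "?m + Kof \<theta> = m0 + Kof \<theta> + j * Kof \<theta>" by simp
    ultimately show ?thesis by (simp only:)
  qed
  have grow: "sigof \<theta> (m0 + Kof \<theta> + j * Kof \<theta>) \<ge> real j * \<delta>" for j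
  proof (induction j)
    case 0 then show ?case using sig_nonneg by simp
  next
    case (Suc j) then show ?case using step[of j] by (simp add: algebra_simps)
  qed
  obtain j where j: "entof \<theta> < real j * \<delta>" using dpos ex_less_of_nat_mult by blast
  have "entof \<theta> < sigof \<theta> (m0 + Kof \<theta> + j * Kof \<theta>)" using j grow[of j] by linarith
  then show False using sm[of "m0 + Kof \<theta> + j * Kof \<theta>"] e by linarith
qed

lemma word_pow_0[simp]: "word_pow u 0 = []" by (simp add: word_pow_def)
lemma word_pow_Suc: "word_pow u (Suc N) = u @ word_pow u N" by (simp add: word_pow_def)
lemma word_pow_add: "word_pow u (a + b) = word_pow u a @ word_pow u b"
  by (simp add: word_pow_def replicate_add)
lemma word_pow_mult: "word_pow (word_pow u k) N = word_pow u (k * N)"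
  by (induction N) (simp_all add: word_pow_Suc word_pow_add[symmetric])
lemma sumlen_word_pow: "sum_list (map f (word_pow u k)) = k * sum_list (map f u)"
  by (induction k) (simp_all add: word_pow_Suc)

lemma S_word_pow: "z \<in> S m w \<Longrightarrow> word_pow z N \<in> S m (word_pow w N)"
  by (induction N) (simp_all add: word_pow_Suc SS_append concI)

lemma per_lower:
  assumes u: "u \<in> periodic_words \<theta> q0" "q0 \<ge> 1" and k: "k \<ge> 1"
  shows "ereal (sigof \<theta> m) \<le> per_growth \<theta> (k * sum_list (map (len m) u))"
proof -
  define Q where "Q = sum_list (map (len m) u)"
  define U where "U = word_pow u k"
  have ulang: "\<And>N. word_pow u N \<in> lang \<theta>" and ulen: "length u = q0"
    using u by (auto simp: periodic_words_def)
  have Q1: "Q \<ge> 1"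
  proof -
    obtain c u' where "u = c # u'" using ulen u(2) by (cases u) auto
    then show ?thesis using len_ge1[of m c] by (simp add: Q_def)
  qed
  have sub: "S m U \<subseteq> periodic_words \<theta> (k * Q)"
  proof
    fix z assume z: "z \<in> S m U"
    have "z \<in> lang \<theta>" using S_lang[OF _ z] ulang by (simp add: U_def)
    moreover have "length z = k * Q" using length_S[OF z] by (simp add: U_def Q_def sumlen_word_pow)
    moreover have "word_pow z N \<in> lang \<theta>" for N
    proof -
      have "word_pow z N \<in> S m (word_pow U N)" using z by (rule S_word_pow)
      moreover have "word_pow U N = word_pow u (k * N)" by (simp add: U_def word_pow_mult)
      ultimately show ?thesis using S_lang ulang by metis
    qed
    ultimately show "z \<in> periodic_words \<theta> (k * Q)" by (simp add: periodic_words_def)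
  qed
  have finP: "finite (periodic_words \<theta> (k * Q))"
    using finite_lang_len[of "k * Q"] by (rule finite_subset[rotated]) (auto simp: periodic_words_def lang_len_def)
  have ne: "periodic_words \<theta> (k * Q) \<noteq> {}" using sub S_ne by blast
  have "card (S m U) \<le> card (periodic_words \<theta> (k * Q))" using sub finP by (rule card_mono[rotated])
  then have "real (card (S m U)) \<le> real (card (periodic_words \<theta> (k * Q)))" by simp
  moreover have "exp (sigof \<theta> m * real (k * Q)) \<le> real (card (S m U))"
    using prod_Nm_ge[of m U] by (simp add: card_S U_def sumlen_word_pow Q_def)
  ultimately have "exp (sigof \<theta> m * real (k * Q)) \<le> real (card (periodic_words \<theta> (k * Q)))" by linarith
  then have "sigof \<theta> m * real (k * Q) \<le> ln (real (card (periodic_words \<theta> (k * Q))))"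
  proof -
    assume le: "exp (sigof \<theta> m * real (k * Q)) \<le> real (card (periodic_words \<theta> (k * Q)))"
    have "ln (exp (sigof \<theta> m * real (k * Q))) \<le> ln (real (card (periodic_words \<theta> (k * Q))))"
      using le exp_gt_zero[of "sigof \<theta> m * real (k * Q)"] by (subst ln_le_cancel_iff) linarith+
    then show ?thesis by simp
  qed
  moreover have kQ: "real (k * Q) > 0" using k Q1 by simp
  ultimately have "sigof \<theta> m \<le> ln (real (card (periodic_words \<theta> (k * Q)))) / real (k * Q)"
    by (simp add: pos_le_divide_eq)
  then show ?thesis using ne by (simp add: per_growth_def Q_def)
qed

lemma limsup_lower:
  assumes u: "u \<in> periodic_words \<theta> q0" "q0 \<ge> 1"
  shows "ereal (sigof \<theta> m) \<le> limsup (per_growth \<theta>)"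
proof -
  define Q where "Q = sum_list (map (len m) u)"
  have Q1: "Q \<ge> 1"
  proof -
    have ulen: "length u = q0" using u by (auto simp: periodic_words_def)
    obtain c u' where "u = c # u'" using ulen u(2) by (cases u) auto
    then show ?thesis using len_ge1[of m c] by (simp add: Q_def)
  qed
  define r where "r k = Suc k * Q" for k
  have mono: "strict_mono r" unfolding r_def using Q1 by (intro strict_monoI) simp
  have "ereal (sigof \<theta> m) \<le> limsup (per_growth \<theta> \<circ> r)"
  proof (rule le_Limsup)
    have "\<forall>k. ereal (sigof \<theta> m) \<le> (per_growth \<theta> \<circ> r) k"
      using per_lower[OF u, of "Suc _" m] by (simp add: r_def Q_def)
    then show "\<forall>\<^sub>F x in sequentially. ereal (sigof \<theta> m) \<le> (per_growth \<theta> \<circ> r) x"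
      by (rule always_eventually)
  qed simp
  also have "\<dots> \<le> limsup (per_growth \<theta>)" using mono by (rule limsup_subseq_mono)
  finally show ?thesis .
qed

lemma per_upper: "n \<ge> 1 \<Longrightarrow> per_growth \<theta> n \<le> ereal (la n / real n)"
proof -
  assume n: "n \<ge> 1"
  show ?thesis
  proof (cases "periodic_words \<theta> n = {}")
    case True then show ?thesis by (simp add: per_growth_def)
  next
    case False
    have sub: "periodic_words \<theta> n \<subseteq> lang_len \<theta> n" by (auto simp: periodic_words_def lang_len_def)
    then have fin: "finite (periodic_words \<theta> n)" using finite_lang_len by (rule finite_subset)
    have "card (periodic_words \<theta> n) \<le> card (lang_len \<theta> n)" using sub finite_lang_len by (rule card_mono[rotated])
    moreover have "card (periodic_words \<theta> n) > 0" using False fin by (simp add: card_gt_0_iff)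
    ultimately have "ln (real (card (periodic_words \<theta> n))) \<le> la n" by simp
    then have "ln (real (card (periodic_words \<theta> n))) / real n \<le> la n / real n"
      using n by (intro divide_right_mono) auto
    then show ?thesis using False by (simp add: per_growth_def)
  qed
qed

lemma limsup_upper: "limsup (per_growth \<theta>) \<le> ereal (entof \<theta>)"
proof -
  have "limsup (per_growth \<theta>) \<le> limsup (\<lambda>n. ereal (la n / real n))"
    by (rule Limsup_mono) (auto intro!: eventually_mono[OF eventually_ge_at_top[of 1]] per_upper)
  also have "\<dots> = ereal (entof \<theta>)"
    by (rule lim_imp_Limsup) (auto intro: h_tendsto)
  finally show ?thesis .
qed

lemma main:
  assumes "\<exists>q. q \<ge> 1 \<and> periodic_words \<theta> q \<noteq> {}"
  shows "ereal (rs_entropy \<theta>) = limsup (per_growth \<theta>)"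
proof (rule antisym)
  obtain q0 u where u: "q0 \<ge> 1" "u \<in> periodic_words \<theta> q0" using assms by blast
  show "ereal (rs_entropy \<theta>) \<le> limsup (per_growth \<theta>)"
  proof (rule ccontr)
    assume "\<not> ereal (rs_entropy \<theta>) \<le> limsup (per_growth \<theta>)"
    then have "limsup (per_growth \<theta>) < ereal (entof \<theta>)" by (simp add: rs_entropy_eq)
    then obtain r where r: "limsup (per_growth \<theta>) < ereal r" "ereal r < ereal (entof \<theta>)"
      using ereal_dense2 by blast
    then have "entof \<theta> - r > 0" by simp
    then obtain m where m: "sigof \<theta> m > entof \<theta> - (entof \<theta> - r)" using sigma_large by blast
    have "ereal (sigof \<theta> m) \<le> limsup (per_growth \<theta>)" using limsup_lower[OF u(2,1)] .
    then have "ereal (sigof \<theta> m) < ereal r" using r(1) by (rule le_less_trans)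
    then have "sigof \<theta> m < r" by simp
    then show False using m by linarith
  qed
  show "limsup (per_growth \<theta>) \<le> ereal (rs_entropy \<theta>)" using limsup_upper by (simp add: rs_entropy_eq)
qed

end

theorem mainTheorem15:
  fixes \<theta> :: "'a::finite \<Rightarrow> 'a list set"
  assumes "random_subst \<theta>"
    and "primitive_subst \<theta>"
    and "semi_compatible \<theta>"
    and "\<exists>q. q \<ge> 1 \<and> periodic_words \<theta> q \<noteq> {}"
  shows "ereal (rs_entropy \<theta>) = limsup (per_growth \<theta>)"
proof -
  interpret rs \<theta> using assms(1-3) by unfold_locales
  show ?thesis using assms(4) by (rule main)
qed

end
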